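(* Let $m\ge 2$ and let $X(0),X(1),\dots$ be i.i.d. random vectors in $\mathbb{R}^m$ (on a common probability space) whose components satisfy $X_{\min,i}\le X_i(k)\le X_{\max,i}$ almost surely, where $X_{\max,i}<\infty$ and $X_{\min,i}>-1$, and where at least one component equals a constant $r\ge 0$ almost surely. For $n\ge 1$ let $\mathcal{X}_{n,i}:=\prod_{k=0}^{n-1}(1+X_i(k))-1$, $\mathcal{X}_n=(\mathcal{X}_{n,1},\dots,\mathcal{X}_{n,m})^T$, $\mathcal{K}:=\{K\in\mathbb{R}^m: K_i\ge 0,\ \sum_i K_i=1\}$, and for each $n$ let $K^*_n\in\mathcal{K}$ maximize $g_n(K):=\frac{1}{n}\mathbb{E}[\log(1+K^T\mathcal{X}_n)]$ over $\mathcal{K}$. Then for every $K\in\mathcal{K}$, $$\limsup_{n\to\infty}\frac{1}{n}\log\frac{1+K^T\mathcal{X}_n}{1+{K_n^*}^T\mathcal{X}_n}\le 0\quad\text{almost surely.}$$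
   Context: $X_i(k)$ is the return of asset $i$ at step $k$; components may be arbitrarily correlated; $n$ is the rebalancing period and $K_n^*$ a Kelly optimal feedback gain for that period. *)

theory Defs
  imports "HOL-Probability.Probability"
begin

definition portfolios :: "(real ^ 'm) set" where
  "portfolios = {K. (\<forall>i. K $ i \<ge> 0) \<and> (\<Sum>i\<in>UNIV. K $ i) = 1}"

definition cumret :: "(nat \<Rightarrow> 'a \<Rightarrow> real ^ 'm) \<Rightarrow> nat \<Rightarrow> 'a \<Rightarrow> real ^ 'm" where
  "cumret X n \<omega> = (\<chi> i. (\<Prod>k<n. 1 + X k \<omega> $ i) - 1)"

definition growth :: "'a measure \<Rightarrow> (nat \<Rightarrow> 'a \<Rightarrow> real ^ 'm) \<Rightarrow> nat \<Rightarrow> real ^ 'm \<Rightarrow> real" where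
  "growth M X n K = (1 / real n) * (\<integral>\<omega>. ln (1 + K \<bullet> cumret X n \<omega>) \<partial>M)"

end

theory Submission
  imports Defs
begin


lemma ln_lower_aux:
  fixes u :: real
  assumes "\<bar>u\<bar> \<le> 1/2"
  shows "u - 2 * u^2 \<le> ln (1 + u)"
proof (cases "u \<ge> 0")
  case True
  have "u - u^2 \<le> ln (1 + u)"
    by (rule ln_one_plus_pos_lower_bound) (use True assms in auto)
  moreover have "0 \<le> u^2" by simp
  ultimately show ?thesis by linarith
next
  case False
  have "-(-u) - 2 * (-u)^2 \<le> ln (1 - (-u))"
    by (rule ln_one_minus_pos_lower_bound) (use False assms in auto)
  then show ?thesis by simp
qed

lemma (in prob_space) kelly_ratio:
  fixes f g :: "'a \<Rightarrow> real" and c C :: real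
  assumes fm[measurable]: "f \<in> borel_measurable M" and gm[measurable]: "g \<in> borel_measurable M"
    and c: "c > 0"
    and fb: "AE \<omega> in M. c \<le> f \<omega> \<and> f \<omega> \<le> C"
    and gb: "AE \<omega> in M. c \<le> g \<omega> \<and> g \<omega> \<le> C"
    and opt: "\<And>t. 0 < t \<Longrightarrow> t \<le> 1 \<Longrightarrow>
       (\<integral>\<omega>. ln ((1 - t) * g \<omega> + t * f \<omega>) \<partial>M) \<le> (\<integral>\<omega>. ln (g \<omega>) \<partial>M)"
  shows "(\<integral>\<omega>. f \<omega> / g \<omega> \<partial>M) \<le> 1"
proof -
  define D where "D = C / c + 1"
  have "AE \<omega> in M. c \<le> C" using fb by eventually_elim auto
  then have cC: "c \<le> C" by simp
  have D: "D \<ge> 1" using cC c unfolding D_def by (simp add: field_simps)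
  have Rb: "AE \<omega> in M. \<bar>f \<omega> / g \<omega> - 1\<bar> \<le> D"
    using fb gb
  proof eventually_elim
    case (elim \<omega>)
    then have "0 \<le> f \<omega> / g \<omega>" using c by auto
    moreover have "f \<omega> / g \<omega> \<le> C / c"
      using elim c by (intro frac_le) auto
    ultimately show ?case unfolding D_def by auto
  qed
  have intR: "integrable M (\<lambda>\<omega>. f \<omega> / g \<omega>)"
  proof (rule integrable_const_bound[where B="D+1"])
    show "AE \<omega> in M. norm (f \<omega> / g \<omega>) \<le> D + 1" using Rb by eventually_elim auto
  qed measurable
  define I where "I = (\<integral>\<omega>. f \<omega> / g \<omega> \<partial>M) - 1"
  have key: "I \<le> 2 * t * D^2" if t0: "0 < t" and t1: "t \<le> 1" and tD: "t * D \<le> 1/2" for t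
  proof -
    let ?h = "\<lambda>\<omega>. (1 - t) * g \<omega> + t * f \<omega>"
    have hb: "AE \<omega> in M. c \<le> ?h \<omega> \<and> ?h \<omega> \<le> C"
      using fb gb
    proof eventually_elim
      case (elim \<omega>)
      have "(1 - t) * c + t * c \<le> ?h \<omega>"
        using elim t0 t1 by (intro add_mono mult_left_mono) auto
      moreover have "?h \<omega> \<le> (1 - t) * C + t * C"
        using elim t0 t1 by (intro add_mono mult_left_mono) auto
      ultimately show ?case by (simp add: algebra_simps)
    qed
    have lnb: "integrable M (\<lambda>\<omega>. ln (k \<omega>))"
      if km[measurable]: "k \<in> borel_measurable M" and kb: "AE \<omega> in M. c \<le> k \<omega> \<and> k \<omega> \<le> C" for k
    proof (rule integrable_const_bound[where B="\<bar>ln c\<bar> + \<bar>ln C\<bar>"])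
      show "AE \<omega> in M. norm (ln (k \<omega>)) \<le> \<bar>ln c\<bar> + \<bar>ln C\<bar>"
        using kb
      proof eventually_elim
        case (elim \<omega>)
        then have "ln c \<le> ln (k \<omega>)" "ln (k \<omega>) \<le> ln C" using c by auto
        then show ?case by auto
      qed
    qed measurable
    have ih: "integrable M (\<lambda>\<omega>. ln (?h \<omega>))" by (rule lnb[OF _ hb]) measurable
    have ig: "integrable M (\<lambda>\<omega>. ln (g \<omega>))" by (rule lnb[OF _ gb]) measurable
    have "(\<integral>\<omega>. t * (f \<omega> / g \<omega> - 1) - 2 * t^2 * D^2 \<partial>M)
        \<le> (\<integral>\<omega>. ln (?h \<omega>) - ln (g \<omega>) \<partial>M)"
    proof (rule integral_mono_AE)
      show "integrable M (\<lambda>\<omega>. t * (f \<omega> / g \<omega> - 1) - 2 * t^2 * D^2)"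
        using intR by auto
      show "integrable M (\<lambda>\<omega>. ln (?h \<omega>) - ln (g \<omega>))" using ih ig by auto
      show "AE \<omega> in M. t * (f \<omega> / g \<omega> - 1) - 2 * t^2 * D^2 \<le> ln (?h \<omega>) - ln (g \<omega>)"
        using Rb gb hb
      proof eventually_elim
        case (elim \<omega>)
        define u where "u = t * (f \<omega> / g \<omega> - 1)"
        have gp: "g \<omega> > 0" using elim c by auto
        have hp: "?h \<omega> > 0" using elim c by auto
        have au: "\<bar>u\<bar> \<le> t * D" unfolding u_def using elim t0
          by (simp add: abs_mult mult_left_mono)
        then have u2: "u^2 \<le> (t*D)^2"
          by (metis abs_ge_zero power2_abs power_mono)
        have "u - 2 * u^2 \<le> ln (1 + u)" using ln_lower_aux[of u] au tD by auto
        moreover have "1 + u = ?h \<omega> / g \<omega>" unfolding u_def using gp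
          by (simp add: field_simps)
        moreover have "ln (?h \<omega> / g \<omega>) = ln (?h \<omega>) - ln (g \<omega>)"
          using gp hp by (simp add: ln_div)
        ultimately show ?case using u2 unfolding u_def by (simp add: power_mult_distrib)
      qed
    qed
    also have "\<dots> = (\<integral>\<omega>. ln (?h \<omega>) \<partial>M) - (\<integral>\<omega>. ln (g \<omega>) \<partial>M)"
      using ih ig by simp
    also have "\<dots> \<le> 0" using opt[OF t0 t1] by simp
    finally have "(\<integral>\<omega>. t * (f \<omega> / g \<omega> - 1) - 2 * t^2 * D^2 \<partial>M) \<le> 0" .
    moreover have "(\<integral>\<omega>. t * (f \<omega> / g \<omega> - 1) - 2 * t^2 * D^2 \<partial>M) = t * I - 2 * t^2 * D^2"
      using intR unfolding I_def by (simp add: prob_space)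
    ultimately have "t * I \<le> t * (2 * t * D^2)" by (simp add: power2_eq_square algebra_simps)
    then show ?thesis using t0 by simp
  qed
  show ?thesis
  proof (rule ccontr)
    assume "\<not> ?thesis"
    then have Ip: "I > 0" unfolding I_def by simp
    define t where "t = min (1 / (2 * D)) (I / (4 * D^2))"
    have t0: "t > 0" using Ip D unfolding t_def by auto
    have "t \<le> 1 / (2 * D)" by (simp add: t_def)
    moreover have "1 / (2 * D) \<le> 1" using D by simp
    ultimately have t1: "t \<le> 1" by linarith
    have "t \<le> 1 / (2 * D)" by (simp add: t_def)
    then have "t * D \<le> 1 / (2 * D) * D" by (rule mult_right_mono) (use D in auto)
    then have tD: "t * D \<le> 1/2" using D by simp
    have "I \<le> 2 * t * D^2" by (rule key[OF t0 t1 tD])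
    also have "\<dots> \<le> 2 * (I / (4 * D^2)) * D^2"
      by (rule mult_right_mono) (auto simp: t_def)
    also have "\<dots> = I / 2" using D by simp
    finally show False using Ip by simp
  qed
qed

lemma W_eq:
  "1 + K \<bullet> cumret X n \<omega> = 1 + (\<Sum>i\<in>UNIV. K $ i * ((\<Prod>k<n. 1 + X k \<omega> $ i) - 1))"
  by (simp add: inner_vec_def cumret_def)

lemma W_eq_port:
  assumes "K \<in> portfolios"
  shows "1 + K \<bullet> cumret X n \<omega> = (\<Sum>i\<in>UNIV. K $ i * (\<Prod>k<n. 1 + X k \<omega> $ i))"
proof -
  have "(\<Sum>i\<in>UNIV. K $ i * ((\<Prod>k<n. 1 + X k \<omega> $ i) - 1))
      = (\<Sum>i\<in>UNIV. K $ i * (\<Prod>k<n. 1 + X k \<omega> $ i)) - (\<Sum>i\<in>UNIV. K $ i)"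
    by (simp add: right_diff_distrib sum_subtractf)
  then show ?thesis using assms unfolding W_eq portfolios_def by simp
qed

lemma W_bounds:
  fixes x :: "nat \<Rightarrow> real ^ 'm"
  assumes K: "K \<in> portfolios" and a: "0 < a"
    and xb: "\<And>k i. a \<le> 1 + x k $ i \<and> 1 + x k $ i \<le> b"
  shows "a ^ n \<le> (\<Sum>i\<in>UNIV. K $ i * (\<Prod>k<n. 1 + x k $ i))
     \<and> (\<Sum>i\<in>UNIV. K $ i * (\<Prod>k<n. 1 + x k $ i)) \<le> b ^ n"
proof -
  have Kp: "\<And>i. K $ i \<ge> 0" and Ks: "(\<Sum>i\<in>UNIV. K $ i) = 1" using K by (auto simp: portfolios_def)
  have lo: "a ^ n \<le> (\<Prod>k<n. 1 + x k $ i)" for i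
  proof -
    have "(\<Prod>k<n. a) \<le> (\<Prod>k<n. 1 + x k $ i)"
      by (rule prod_mono) (use a xb in \<open>auto intro: less_imp_le\<close>)
    then show ?thesis by simp
  qed
  have hi: "(\<Prod>k<n. 1 + x k $ i) \<le> b ^ n" for i
  proof -
    have "(\<Prod>k<n. 1 + x k $ i) \<le> (\<Prod>k<n. b)"
      by (rule prod_mono) (use a xb in \<open>auto intro: order.trans[OF less_imp_le]\<close>)
    then show ?thesis by simp
  qed
  have "(\<Sum>i\<in>UNIV. K $ i * a ^ n) \<le> (\<Sum>i\<in>UNIV. K $ i * (\<Prod>k<n. 1 + x k $ i))"
    by (rule sum_mono) (use Kp lo in \<open>auto intro: mult_left_mono\<close>)
  moreover have "(\<Sum>i\<in>UNIV. K $ i * (\<Prod>k<n. 1 + x k $ i)) \<le> (\<Sum>i\<in>UNIV. K $ i * b ^ n)"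
    by (rule sum_mono) (use Kp hi in \<open>auto intro: mult_left_mono\<close>)
  moreover have "(\<Sum>i\<in>UNIV. K $ i * a ^ n) = a ^ n" "(\<Sum>i\<in>UNIV. K $ i * b ^ n) = b ^ n"
    using Ks by (simp_all add: sum_distrib_right[symmetric])
  ultimately show ?thesis by simp
qed

lemma mix_port:
  assumes "K \<in> portfolios" "L \<in> portfolios" "0 \<le> t" "t \<le> 1"
  shows "(1 - t) *\<^sub>R L + t *\<^sub>R K \<in> portfolios"
proof -
  have "(\<Sum>i\<in>UNIV. ((1 - t) *\<^sub>R L + t *\<^sub>R K) $ i) = (1 - t) * (\<Sum>i\<in>UNIV. L $ i) + t * (\<Sum>i\<in>UNIV. K $ i)"
    by (simp add: sum.distrib sum_distrib_left)
  then show ?thesis using assms unfolding portfolios_def by auto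
qed

lemma mix_W:
  "1 + ((1 - t) *\<^sub>R L + t *\<^sub>R K) \<bullet> c = (1 - t) * (1 + L \<bullet> c) + t * (1 + K \<bullet> c)"
  by (simp add: inner_add_left algebra_simps)


lemma (in prob_space) bc_limsup:
  fixes R :: "nat \<Rightarrow> 'a \<Rightarrow> real"
  assumes Rm[measurable]: "\<And>n. R n \<in> borel_measurable M"
    and pos: "\<And>n. n \<ge> 1 \<Longrightarrow> AE \<omega> in M. R n \<omega> > 0"
    and int: "\<And>n. n \<ge> 1 \<Longrightarrow> integrable M (R n)"
    and E: "\<And>n. n \<ge> 1 \<Longrightarrow> (\<integral>\<omega>. R n \<omega> \<partial>M) \<le> 1"
  shows "AE \<omega> in M. limsup (\<lambda>n. ereal ((1 / real n) * ln (R n \<omega>))) \<le> 0"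
proof -
  have posall': "\<forall>n. AE \<omega> in M. n \<ge> 1 \<longrightarrow> R n \<omega> > 0"
  proof
    fix n :: nat
    show "AE \<omega> in M. n \<ge> 1 \<longrightarrow> R n \<omega> > 0"
    proof (cases "n \<ge> 1")
      case True
      show ?thesis using pos[OF True] by eventually_elim simp
    next
      case False
      then show ?thesis by simp
    qed
  qed
  have posall: "AE \<omega> in M. \<forall>n. n \<ge> 1 \<longrightarrow> R n \<omega> > 0"
    by (subst AE_all_countable) (rule posall')
  have eps: "AE \<omega> in M. limsup (\<lambda>n. ereal ((1 / real n) * ln (R n \<omega>))) \<le> ereal e"
    if e: "e > 0" for e
  proof -
    define A where "A n = {\<omega> \<in> space M. exp (real n * e) \<le> R n \<omega>}" for n
    have Am[measurable]: "A n \<in> sets M" for n unfolding A_def by measurable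
    have bound: "measure M (A n) \<le> exp (-e) ^ n" for n
    proof (cases "n \<ge> 1")
      case False
      then have "n = 0" by simp
      then show ?thesis using prob_le_1[of "A n"] by simp
    next
      case True
      have nn: "AE \<omega> in M. 0 \<le> R n \<omega>" using pos[OF True] by eventually_elim simp
      have "measure M (A n) \<le> (\<integral>\<omega>. R n \<omega> \<partial>M) / exp (real n * e)"
        unfolding A_def
        by (rule integral_Markov_inequality_measure[OF int[OF True] sets.top nn exp_gt_zero])
      also have "\<dots> \<le> 1 / exp (real n * e)"
        using E[OF True] by (intro divide_right_mono) auto
      also have "1 / exp (real n * e) = exp (real n * (-e))" by (simp add: exp_minus inverse_eq_divide)
      also have "\<dots> = exp (-e) ^ n" by (rule exp_of_nat_mult)
      finally show ?thesis .
    qed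
    have summ: "summable (\<lambda>n. measure M (A n))"
    proof (rule summable_comparison_test)
      show "\<exists>N. \<forall>n\<ge>N. norm (measure M (A n)) \<le> exp (-e) ^ n" using bound by auto
      show "summable (\<lambda>n. exp (-e) ^ n)" using e by (intro summable_geometric) auto
    qed
    have "AE \<omega> in M. eventually (\<lambda>n. \<omega> \<in> space M - A n) sequentially"
      by (rule borel_cantelli_AE1[OF Am _ summ]) (simp add: less_top[symmetric])
    then show ?thesis using posall
    proof eventually_elim
      case (elim \<omega>)
      then obtain N where N: "\<And>n. n \<ge> N \<Longrightarrow> \<omega> \<in> space M - A n"
        by (auto simp: eventually_sequentially)
      have H: "ereal ((1 / real n) * ln (R n \<omega>)) \<le> ereal e" if n: "n \<ge> max N 1" for n
      proof -
        have n1: "n \<ge> 1" using n by simp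
        have Rp: "R n \<omega> > 0" using elim n1 by auto
        have "R n \<omega> < exp (real n * e)" using N[of n] n unfolding A_def by auto
        then have "ln (R n \<omega>) < ln (exp (real n * e))" using Rp by (subst ln_less_cancel_iff) auto
        then have "ln (R n \<omega>) < real n * e" by (simp only: ln_exp)
        moreover have np: "0 < 1 / real n" using n1 by simp
        ultimately have "(1 / real n) * ln (R n \<omega>) < (1 / real n) * (real n * e)"
          by (intro mult_strict_left_mono)
        also have "(1 / real n) * (real n * e) = e" using n1 by simp
        finally have "(1 / real n) * ln (R n \<omega>) < e" .
        then show ?thesis by simp
      qed
      have "eventually (\<lambda>n. ereal ((1 / real n) * ln (R n \<omega>)) \<le> ereal e) sequentially"
        unfolding eventually_sequentially using H by blast
      then show ?case by (rule Limsup_bounded)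
    qed
  qed
  have "AE \<omega> in M. \<forall>j::nat. limsup (\<lambda>n. ereal ((1 / real n) * ln (R n \<omega>))) \<le> ereal (1 / real (Suc j))"
    unfolding AE_all_countable by (intro allI eps) simp
  then show ?thesis
  proof eventually_elim
    case (elim \<omega>)
    show ?case
    proof (rule ereal_le_epsilon2)
      fix e :: real assume "0 < e"
      then obtain j where j: "inverse (real (Suc j)) < e" using reals_Archimedean by blast
      have "limsup (\<lambda>n. ereal ((1 / real n) * ln (R n \<omega>))) \<le> ereal (1 / real (Suc j))"
        using elim by blast
      also have "\<dots> \<le> 0 + ereal e" using j by (simp add: inverse_eq_divide)
      finally show "limsup (\<lambda>n. ereal ((1 / real n) * ln (R n \<omega>))) \<le> 0 + ereal e" .
    qed
  qed
qed


theorem lemma2: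
  fixes M :: "'a measure"
    and X :: "nat \<Rightarrow> 'a \<Rightarrow> real ^ 'm"
    and Xmin Xmax :: "real ^ 'm"
    and Kstar :: "nat \<Rightarrow> real ^ 'm"
  assumes "prob_space M"
    and "CARD('m) \<ge> 2"
    and meas: "\<And>k. X k \<in> borel_measurable M"
    and indep: "prob_space.indep_vars M (\<lambda>_. borel) X UNIV"
    and ident: "\<And>k. distr M borel (X k) = distr M borel (X 0)"
    and bounds: "\<And>k i. AE \<omega> in M. Xmin $ i \<le> X k \<omega> $ i \<and> X k \<omega> $ i \<le> Xmax $ i"
    and lower: "\<And>i. Xmin $ i > -1"
    and riskless: "\<exists>j r. r \<ge> 0 \<and> (\<forall>k. AE \<omega> in M. X k \<omega> $ j = r)"
    and Kstar_in: "\<And>n. n \<ge> 1 \<Longrightarrow> Kstar n \<in> portfolios"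
    and Kstar_opt: "\<And>n K. n \<ge> 1 \<Longrightarrow> K \<in> portfolios \<Longrightarrow> growth M X n K \<le> growth M X n (Kstar n)"
    and K: "K \<in> portfolios"
  shows "AE \<omega> in M. limsup (\<lambda>n. ereal ((1 / real n) *
           ln ((1 + K \<bullet> cumret X n \<omega>) / (1 + Kstar n \<bullet> cumret X n \<omega>)))) \<le> 0"
proof -
  interpret prob_space M by fact
  have Xm[measurable]: "(\<lambda>\<omega>. X k \<omega> $ i) \<in> borel_measurable M" for k i
    using borel_measurable_nth measurable_compose meas by blast
  have Wm[measurable]: "(\<lambda>\<omega>. 1 + L \<bullet> cumret X n \<omega>) \<in> borel_measurable M" for L n
    unfolding W_eq by measurable
  define a where "a = Min (range (\<lambda>i. 1 + Xmin $ i))"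
  define b where "b = Max (range (\<lambda>i. 1 + Xmax $ i))"
  have a0: "a > 0" unfolding a_def using lower
  proof (subst Min_gr_iff)
    show "\<forall>x\<in>range (\<lambda>i. 1 + Xmin $ i). 0 < x"
    proof
      fix x assume "x \<in> range (\<lambda>i. 1 + Xmin $ i)"
      then obtain i where "x = 1 + Xmin $ i" by auto
      then show "0 < x" using lower[of i] by linarith
    qed
  qed auto
  have ai: "a \<le> 1 + Xmin $ i" for i unfolding a_def by (rule Min_le) auto
  have bi: "1 + Xmax $ i \<le> b" for i unfolding b_def by (rule Max_ge) auto
  have AEb: "AE \<omega> in M. \<forall>k i. a \<le> 1 + X k \<omega> $ i \<and> 1 + X k \<omega> $ i \<le> b"
  proof -
    have "AE \<omega> in M. \<forall>i\<in>UNIV. a \<le> 1 + X k \<omega> $ i \<and> 1 + X k \<omega> $ i \<le> b" for k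
    proof (rule AE_finite_allI)
      fix i :: 'm
      show "AE \<omega> in M. a \<le> 1 + X k \<omega> $ i \<and> 1 + X k \<omega> $ i \<le> b"
        using bounds[where k=k and i=i] by eventually_elim (use ai[of i] bi[of i] in auto)
    qed simp
    then have "\<forall>k. AE \<omega> in M. \<forall>i. a \<le> 1 + X k \<omega> $ i \<and> 1 + X k \<omega> $ i \<le> b" by simp
    then show ?thesis by (subst AE_all_countable) blast
  qed
  have Wb: "AE \<omega> in M. a ^ n \<le> 1 + L \<bullet> cumret X n \<omega> \<and> 1 + L \<bullet> cumret X n \<omega> \<le> b ^ n"
    if L: "L \<in> portfolios" for L n
    using AEb
  proof eventually_elim
    case (elim \<omega>)
    have "a ^ n \<le> (\<Sum>i\<in>UNIV. L $ i * (\<Prod>k<n. 1 + X k \<omega> $ i))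
       \<and> (\<Sum>i\<in>UNIV. L $ i * (\<Prod>k<n. 1 + X k \<omega> $ i)) \<le> b ^ n"
      by (rule W_bounds[OF L a0, where x="\<lambda>k. X k \<omega>" and b=b]) (use elim in blast)
    then show ?case using W_eq_port[OF L, of X n \<omega>] by simp
  qed
  define R where "R n \<omega> = (1 + K \<bullet> cumret X n \<omega>) / (1 + Kstar n \<bullet> cumret X n \<omega>)" for n \<omega>
  have Rm: "R n \<in> borel_measurable M" for n unfolding R_def by measurable
  have main: "(AE \<omega> in M. R n \<omega> > 0) \<and> integrable M (R n) \<and> (\<integral>\<omega>. R n \<omega> \<partial>M) \<le> 1"
    if n: "n \<ge> 1" for n
  proof -
    have Ks: "Kstar n \<in> portfolios" using Kstar_in[OF n] .
    let ?f = "\<lambda>\<omega>. 1 + K \<bullet> cumret X n \<omega>"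
    let ?g = "\<lambda>\<omega>. 1 + Kstar n \<bullet> cumret X n \<omega>"
    have fb: "AE \<omega> in M. a ^ n \<le> ?f \<omega> \<and> ?f \<omega> \<le> b ^ n" by (rule Wb[OF K])
    have gb: "AE \<omega> in M. a ^ n \<le> ?g \<omega> \<and> ?g \<omega> \<le> b ^ n" by (rule Wb[OF Ks])
    have E: "(\<integral>\<omega>. ?f \<omega> / ?g \<omega> \<partial>M) \<le> 1"
    proof (rule kelly_ratio[OF _ _ _ fb gb])
      show "0 < a ^ n" using a0 by simp
      fix t :: real assume t: "0 < t" "t \<le> 1"
      have P: "(1 - t) *\<^sub>R Kstar n + t *\<^sub>R K \<in> portfolios"
        by (rule mix_port[OF K Ks]) (use t in auto)
      have "growth M X n ((1 - t) *\<^sub>R Kstar n + t *\<^sub>R K) \<le> growth M X n (Kstar n)"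
        using Kstar_opt[OF n P] .
      then have "(\<integral>\<omega>. ln (1 + ((1 - t) *\<^sub>R Kstar n + t *\<^sub>R K) \<bullet> cumret X n \<omega>) \<partial>M)
          \<le> (\<integral>\<omega>. ln (?g \<omega>) \<partial>M)"
        unfolding growth_def by (subst (asm) mult_le_cancel_left_pos) (use n in auto)
      then show "(\<integral>\<omega>. ln ((1 - t) * ?g \<omega> + t * ?f \<omega>) \<partial>M) \<le> (\<integral>\<omega>. ln (?g \<omega>) \<partial>M)"
        by (simp only: mix_W)
    qed (rule Wm)+
    have pos: "AE \<omega> in M. R n \<omega> > 0"
      using fb gb
    proof eventually_elim
      case (elim \<omega>)
      have "0 < a ^ n" using a0 by simp
      then have f0: "0 < ?f \<omega>" and g0: "0 < ?g \<omega>" using elim by linarith+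
      show ?case unfolding R_def by (rule divide_pos_pos[OF f0 g0])
    qed
    have int: "integrable M (R n)"
    proof (rule integrable_const_bound[where B="b ^ n / a ^ n"])
      show "AE \<omega> in M. norm (R n \<omega>) \<le> b ^ n / a ^ n"
        using fb gb
      proof eventually_elim
        case (elim \<omega>)
        have "0 < a ^ n" using a0 by simp
        then have f0: "0 < ?f \<omega>" and g0: "0 < ?g \<omega>" using elim by linarith+
        have "R n \<omega> \<le> b ^ n / a ^ n" unfolding R_def
        proof (rule frac_le)
          show "0 \<le> b ^ n" using f0 elim by linarith
          show "?f \<omega> \<le> b ^ n" using elim by linarith
          show "0 < a ^ n" by fact
          show "a ^ n \<le> ?g \<omega>" using elim by linarith
        qed
        moreover have "0 \<le> R n \<omega>" unfolding R_def using f0 g0 by (intro divide_nonneg_pos) auto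
        ultimately show ?case by (simp only: real_norm_def abs_of_nonneg)
      qed
    qed (rule Rm)
    have E': "(\<integral>\<omega>. R n \<omega> \<partial>M) \<le> 1" unfolding R_def by (rule E)
    show ?thesis using pos int E' by blast
  qed
  have "AE \<omega> in M. limsup (\<lambda>n. ereal ((1 / real n) * ln (R n \<omega>))) \<le> 0"
  proof (rule bc_limsup[OF Rm])
    fix n :: nat assume n: "n \<ge> 1"
    show "AE \<omega> in M. R n \<omega> > 0" using main[OF n] by blast
    show "integrable M (R n)" using main[OF n] by blast
    show "(\<integral>\<omega>. R n \<omega> \<partial>M) \<le> 1" using main[OF n] by blast
  qed
  then show ?thesis unfolding R_def .
qed

end
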